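(* Let $\Bbbk$ be a field of characteristic $0$, $n\ge2$, and let $(A,\mu,\alpha)$ be a multiplicative $n$-ary totally Hom-associative algebra over $\Bbbk$, with $\mu(a_1,\ldots,a_n)=(a_1\cdots a_n)$. Define a $(2n-1)$-linear product by $(a_1,\ldots,a_{2n-1})^{(1)}=\big((a_1\cdots a_n),\alpha(a_{n+1}),\ldots,\alpha(a_{2n-1})\big)$ (the outer bracket being $\mu$). Then $A^1=(A,(\cdot)^{(1)},\alpha^2)$, with all $2n-2$ twisting maps equal to $\alpha^2$, is a multiplicative $(2n-1)$-ary totally Hom-associative algebra.
   Context: An $m$-ary Hom-algebra $(V,\mu,(\alpha_1,\ldots,\alpha_{m-1}))$ is a vector space $V$ with an $m$-linear map $\mu$ (written $\mu(a_1,\ldots,a_m)=(a_1\cdots a_m)$) and linear maps $\alpha_i\colon V\to V$. It is multiplicative if all $\alpha_i$ equal one map $\alpha$ and $\alpha\circ\mu=\mu\circ\alpha^{\otimes m}$. It is $m$-ary totally Hom-associative if for every $i\in\{1,\ldots,m-1\}$ and all $a_1,\ldots,a_{2m-1}$: $(\alpha_1(a_1),\ldots,\alpha_{i-1}(a_{i-1}),(a_i\cdots a_{i+m-1}),\alpha_i(a_{i+m}),\ldots,\alpha_{m-1}(a_{2m-1}))=(\alpha_1(a_1),\ldots,\alpha_i(a_i),(a_{i+1}\cdots a_{i+m}),\alpha_{i+1}(a_{i+m+1}),\ldots,\alpha_{m-1}(a_{2m-1}))$. *)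

theory Defs
  imports Complex_Main
begin

text \<open>An m-ary product on a k-vector space V (scalar multiplication scale) is
modelled as a function on lists; only its values on lists of length m matter.\<close>

definition multilinear ::
  "('k::field \<Rightarrow> 'v::ab_group_add \<Rightarrow> 'v) \<Rightarrow> nat \<Rightarrow> ('v list \<Rightarrow> 'v) \<Rightarrow> bool" where
  "multilinear scale m mu \<longleftrightarrow>
     (\<forall>xs ys. length xs + length ys + 1 = m \<longrightarrow>
        Vector_Spaces.linear scale scale (\<lambda>x. mu (xs @ x # ys)))"

definition hom_algebra ::
  "('k::field \<Rightarrow> 'v::ab_group_add \<Rightarrow> 'v) \<Rightarrow> nat \<Rightarrow> ('v list \<Rightarrow> 'v) \<Rightarrow> ('v \<Rightarrow> 'v) list \<Rightarrow> bool" where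
  "hom_algebra scale m mu alphas \<longleftrightarrow>
     Vector_Spaces.vector_space scale \<and> multilinear scale m mu \<and> length alphas = m - 1 \<and>
     (\<forall>f \<in> set alphas. Vector_Spaces.linear scale scale f)"

definition multiplicative_with ::
  "nat \<Rightarrow> ('v list \<Rightarrow> 'v) \<Rightarrow> ('v \<Rightarrow> 'v) list \<Rightarrow> ('v \<Rightarrow> 'v) \<Rightarrow> bool" where
  "multiplicative_with m mu alphas alpha \<longleftrightarrow>
     (\<forall>f \<in> set alphas. f = alpha) \<and>
     (\<forall>as. length as = m \<longrightarrow> alpha (mu as) = mu (map alpha as))"

definition multiplicative_hom_algebra ::
  "('k::field \<Rightarrow> 'v::ab_group_add \<Rightarrow> 'v) \<Rightarrow> nat \<Rightarrow> ('v list \<Rightarrow> 'v) \<Rightarrow> ('v \<Rightarrow> 'v) list \<Rightarrow> bool" where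
  "multiplicative_hom_algebra scale m mu alphas \<longleftrightarrow>
     hom_algebra scale m mu alphas \<and> (\<exists>alpha. multiplicative_with m mu alphas alpha)"

text \<open>The bracketing with the inner product at (0-indexed) position j, for a
list as = [a_0,...,a_{2m-2}]:
  (alpha_0 a_0, ..., alpha_{j-1} a_{j-1}, mu(a_j..a_{j+m-1}), alpha_j a_{j+m}, ..., alpha_{m-2} a_{2m-2}).\<close>

definition hom_bracket ::
  "nat \<Rightarrow> ('v list \<Rightarrow> 'v) \<Rightarrow> ('v \<Rightarrow> 'v) list \<Rightarrow> nat \<Rightarrow> 'v list \<Rightarrow> 'v" where
  "hom_bracket m mu alphas j as =
     mu (map (\<lambda>k. (alphas ! k) (as ! k)) [0..<j]
         @ [mu (take m (drop j as))]
         @ map (\<lambda>k. (alphas ! k) (as ! (k + m))) [j..<m - 1])"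

definition totally_hom_associative ::
  "nat \<Rightarrow> ('v list \<Rightarrow> 'v) \<Rightarrow> ('v \<Rightarrow> 'v) list \<Rightarrow> bool" where
  "totally_hom_associative m mu alphas \<longleftrightarrow>
     (\<forall>j as. j + 1 < m \<longrightarrow> length as = 2 * m - 1 \<longrightarrow>
        hom_bracket m mu alphas j as = hom_bracket m mu alphas (j + 1) as)"

definition derived_product ::
  "nat \<Rightarrow> ('v list \<Rightarrow> 'v) \<Rightarrow> ('v \<Rightarrow> 'v) \<Rightarrow> 'v list \<Rightarrow> 'v" where
  "derived_product n mu alpha as = mu (mu (take n as) # map alpha (drop n as))"

end

theory Submission
  imports Defs
begin

definition Bg :: "nat \<Rightarrow> ('v list \<Rightarrow> 'v) \<Rightarrow> ('v \<Rightarrow> 'v) \<Rightarrow> nat \<Rightarrow> 'v list \<Rightarrow> 'v" where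
"Bg m mu f j as = mu (map f (take j as) @ [mu (take m (drop j as))] @ map f (drop (j+m) as))"

lemma hb_Bg:
  assumes "j + 1 \<le> m" "length as = 2*m - 1"
  shows "hom_bracket m mu (replicate (m-1) f) j as = Bg m mu f j as"
proof -
  have 1: "map (\<lambda>k. (replicate (m-1) f ! k) (as ! k)) [0..<j] = map f (take j as)"
    by (rule nth_equalityI) (use assms in auto)
  have 2: "map (\<lambda>k. (replicate (m-1) f ! k) (as ! (k + m))) [j..<m - 1] = map f (drop (j+m) as)"
    by (rule nth_equalityI) (use assms in \<open>auto simp: add_ac\<close>)
  show ?thesis unfolding hom_bracket_def Bg_def 1 2 ..
qed

lemma Bg_0:
  assumes "totally_hom_associative n mu (replicate (n-1) f)" "j < n" "length as = 2*n - 1"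
  shows "Bg n mu f j as = Bg n mu f 0 as"
  using assms(2)
proof (induction j)
  case 0 then show ?case by simp
next
  case (Suc j)
  have "hom_bracket n mu (replicate (n-1) f) j as = hom_bracket n mu (replicate (n-1) f) (j+1) as"
    using assms(1,3) Suc.prems unfolding totally_hom_associative_def by auto
  then have "Bg n mu f j as = Bg n mu f (Suc j) as"
    using hb_Bg[of j n as mu f] hb_Bg[of "j+1" n as mu f] Suc.prems assms(3) by simp
  then show ?case using Suc by simp
qed

lemma tk: "length a = k \<Longrightarrow> take k (a@b) = a" by simp
lemma dr: "length a = k \<Longrightarrow> drop k (a@b) = b" by simp

lemma Bg_split: "length a = p \<Longrightarrow> length b = n \<Longrightarrow> Bg n mu f p (a@b@c) = mu (map f a @ [mu b] @ map f c)"
  unfolding Bg_def by simp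

lemma Bg0_split: "length a = n \<Longrightarrow> Bg n mu f 0 (a@b) = mu (mu a # map f b)"
  using Bg_split[of "[]" 0 a n mu f b] by simp

lemma K:
  assumes A: "\<And>j as. j < n \<Longrightarrow> length as = 2*n - 1 \<Longrightarrow> Bg n mu f j as = Bg n mu f 0 as"
    and l: "length P = p" "p \<le> n - 1" "length c11 = n - p" "length c12 = p"
       "length c21 = n - 1 - p" "length c22 = p" "length Q = n - 1 - p" "n \<ge> 2"
  shows "mu (map (f\<circ>f) P @ [mu (mu (c11@c12) # map f (c21@c22))] @ map (f\<circ>f) Q)
       = mu (mu (mu (P@c11) # map f (c12 @ c21)) # map (f\<circ>f) (c22 @ Q))"
proof -
  define xs where "xs = map f P @ (mu (c11@c12) # map f c21 @ map f c22) @ map f Q"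
  have lx: "length xs = 2*n - 1" using l unfolding xs_def by simp
  have "mu (map (f\<circ>f) P @ [mu (mu (c11@c12) # map f (c21@c22))] @ map (f\<circ>f) Q) = Bg n mu f p xs"
    unfolding xs_def using l by (subst Bg_split) auto
  also have "\<dots> = Bg n mu f 0 xs" using A[of p xs] lx l by simp
  also have "xs = (map f P @ [mu (c11@c12)] @ map f c21) @ (map f c22 @ map f Q)"
    unfolding xs_def by simp
  also have "Bg n mu f 0 \<dots> = mu (mu (map f P @ [mu (c11@c12)] @ map f c21) # map f (map f c22 @ map f Q))"
    using l by (subst Bg0_split) auto
  also have "mu (map f P @ [mu (c11@c12)] @ map f c21) = Bg n mu f p (P @ (c11 @ c12) @ c21)"
    using l by (subst Bg_split) auto
  also have "\<dots> = Bg n mu f 0 (P @ (c11 @ c12) @ c21)" using A[of p "P @ (c11 @ c12) @ c21"] l by simp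
  also have "P @ (c11 @ c12) @ c21 = (P @ c11) @ (c12 @ c21)" by simp
  also have "Bg n mu f 0 \<dots> = mu (mu (P@c11) # map f (c12 @ c21))"
    using l by (subst Bg0_split) auto
  finally show ?thesis by (simp add: comp_def)
qed


lemma D_split: "length a = n \<Longrightarrow> derived_product n mu f (a@b) = mu (mu a # map f b)"
  unfolding derived_product_def by simp

lemma D_Bg: "derived_product n mu f L = Bg n mu f 0 L"
  unfolding derived_product_def Bg_def by simp

lemma Main:
  assumes A: "\<And>j as. j < n \<Longrightarrow> length as = 2*n - 1 \<Longrightarrow> Bg n mu f j as = Bg n mu f 0 as"
    and l: "length P = p" "p \<le> n - 1" "length c11 = n - p" "length c12 = p"
       "length c21 = n - 1 - p" "length c22 = p" "length Q = n - 1 - p" "n \<ge> 2"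
       "length A0 = i" "i \<le> n - 1" "length R = n - 1 - i"
  shows "Bg (2*n-1) (derived_product n mu f) (f\<circ>f) (i+p) (A0@P@c11@c12@c21@c22@Q@R)
    = mu (map f (map (f\<circ>f) A0) @ [mu (mu (mu (P@c11) # map f (c12@c21)) # map (f\<circ>f) (c22@Q))] @ map f (map (f\<circ>f) R))"
proof -
  let ?D = "derived_product n mu f"
  have "A0@P@c11@c12@c21@c22@Q@R = (A0@P) @ ((c11@c12)@(c21@c22)) @ (Q@R)" by simp
  then have "Bg (2*n-1) ?D (f\<circ>f) (i+p) (A0@P@c11@c12@c21@c22@Q@R)
     = ?D (map (f\<circ>f) (A0@P) @ [?D ((c11@c12)@(c21@c22))] @ map (f\<circ>f) (Q@R))"
    using l by (simp only:) (subst Bg_split; auto)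
  also have "?D ((c11@c12)@(c21@c22)) = mu (mu (c11@c12) # map f (c21@c22))"
    using l by (subst D_split) auto
  also have "map (f\<circ>f) (A0@P) @ [mu (mu (c11@c12) # map f (c21@c22))] @ map (f\<circ>f) (Q@R)
     = map (f\<circ>f) A0 @ (map (f\<circ>f) P @ [mu (mu (c11@c12) # map f (c21@c22))] @ map (f\<circ>f) Q) @ map (f\<circ>f) R"
    by simp
  also have "?D \<dots> = Bg n mu f i \<dots>"
    unfolding D_Bg by (rule A[symmetric]) (use l in auto)
  also have "\<dots> = mu (map f (map (f\<circ>f) A0) @ [mu (map (f\<circ>f) P @ [mu (mu (c11@c12) # map f (c21@c22))] @ map (f\<circ>f) Q)] @ map f (map (f\<circ>f) R))"
    using l by (subst Bg_split) auto
  also have "mu (map (f\<circ>f) P @ [mu (mu (c11@c12) # map f (c21@c22))] @ map (f\<circ>f) Q)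
     = mu (mu (mu (P@c11) # map f (c12 @ c21)) # map (f\<circ>f) (c22 @ Q))"
    by (rule K[OF A l(1-8)])
  finally show ?thesis .
qed


definition G :: "nat \<Rightarrow> ('v list \<Rightarrow> 'v) \<Rightarrow> ('v \<Rightarrow> 'v) \<Rightarrow> nat \<Rightarrow> 'v list \<Rightarrow> 'v" where
"G n mu f i as = mu (map f (map (f\<circ>f) (take i as)) @
   [mu (mu (mu (take n (drop i as)) # map f (take (n-1) (drop (i+n) as))) # map (f\<circ>f) (take (n-1) (drop (i+2*n-1) as)))]
   @ map f (map (f\<circ>f) (drop (i+3*n-2) as)))"

lemma Decomp:
  assumes A: "\<And>j as. j < n \<Longrightarrow> length as = 2*n - 1 \<Longrightarrow> Bg n mu f j as = Bg n mu f 0 as"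
    and l: "n \<ge> 2" "i \<le> n - 1" "p \<le> n - 1" "length as = 4*n - 3"
  shows "Bg (2*n-1) (derived_product n mu f) (f\<circ>f) (i+p) as = G n mu f i as"
proof -
  define A0 where "A0 = take i as"
  define r0 where "r0 = drop i as"
  define P where "P = take p r0"
  define r1 where "r1 = drop p r0"
  define c11 where "c11 = take (n-p) r1"
  define r2 where "r2 = drop (n-p) r1"
  define c12 where "c12 = take p r2"
  define r3 where "r3 = drop p r2"
  define c21 where "c21 = take (n-1-p) r3"
  define r4 where "r4 = drop (n-1-p) r3"
  define c22 where "c22 = take p r4"
  define r5 where "r5 = drop p r4"
  define Q where "Q = take (n-1-p) r5"
  define R where "R = drop (n-1-p) r5"
  have "as = A0@r0" "r0 = P@r1" "r1 = c11@r2" "r2 = c12@r3" "r3 = c21@r4" "r4 = c22@r5" "r5 = Q@R"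
    by (simp_all only: A0_def r0_def P_def r1_def c11_def r2_def c12_def r3_def c21_def r4_def c22_def
      r5_def Q_def R_def append_take_drop_id)
  then have eq: "as = A0@P@c11@c12@c21@c22@Q@R" by simp
  have lr0: "length r0 = 4*n-3-i" using l by (simp add: r0_def)
  have lr1: "length r1 = 4*n-3-i-p" using lr0 by (simp add: r1_def)
  have lr2: "length r2 = 3*n-3-i" using lr1 l by (simp add: r2_def)
  have lr3: "length r3 = 3*n-3-i-p" using lr2 l by (simp add: r3_def)
  have lr4: "length r4 = 2*n-2-i" using lr3 l by (simp add: r4_def)
  have lr5: "length r5 = 2*n-2-i-p" using lr4 l by (simp add: r5_def)
  have ls: "length A0 = i" "length P = p" "length c11 = n - p" "length c12 = p"
       "length c21 = n - 1 - p" "length c22 = p" "length Q = n - 1 - p" "length R = n - 1 - i"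
  proof -
    show "length A0 = i" using l by (simp add: A0_def)
    show "length P = p" using l lr0 by (simp add: P_def)
    show "length c11 = n - p" using l lr1 by (simp add: c11_def)
    show "length c12 = p" using l lr2 by (simp add: c12_def)
    show "length c21 = n - 1 - p" using l lr3 by (simp add: c21_def)
    show "length c22 = p" using l lr4 by (simp add: c22_def)
    show "length Q = n - 1 - p" using l lr5 by (simp add: Q_def)
    show "length R = n - 1 - i" using l lr5 by (simp add: R_def)
  qed
  have M: "Bg (2*n-1) (derived_product n mu f) (f\<circ>f) (i+p) as
    = mu (map f (map (f\<circ>f) A0) @ [mu (mu (mu (P@c11) # map f (c12@c21)) # map (f\<circ>f) (c22@Q))] @ map f (map (f\<circ>f) R))"
    unfolding eq by (rule Main[OF A]) (use ls l in auto)
  have d0: "drop i as = (P@c11)@(c12@c21)@(c22@Q)@R" unfolding eq using ls by simp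
  have t1: "take n (drop i as) = P@c11" unfolding d0 by (rule tk) (use ls l in simp)
  have d1: "drop (i+n) as = (c12@c21)@(c22@Q)@R"
  proof -
    have "drop (i+n) as = drop n (drop i as)" by (simp add: add.commute)
    then show ?thesis unfolding d0 using dr[of "P@c11" n "(c12@c21)@(c22@Q)@R"] ls l by simp
  qed
  have t2: "take (n-1) (drop (i+n) as) = c12@c21" unfolding d1 by (rule tk) (use ls l in simp)
  have d2: "drop (i+2*n-1) as = (c22@Q)@R"
  proof -
    have e: "i+2*n-1 = (n-1)+(i+n)" using l by arith
    have "drop (i+2*n-1) as = drop (n-1) (drop (i+n) as)" by (simp only: e drop_drop)
    then show ?thesis unfolding d1 using dr[of "c12@c21" "n-1" "(c22@Q)@R"] ls l by simp
  qed
  have t3: "take (n-1) (drop (i+2*n-1) as) = c22@Q" unfolding d2 by (rule tk) (use ls l in simp)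
  have d3: "drop (i+3*n-2) as = R"
  proof -
    have e: "i+3*n-2 = (n-1)+(i+2*n-1)" using l by arith
    have "drop (i+3*n-2) as = drop (n-1) (drop (i+2*n-1) as)" by (simp only: e drop_drop)
    then show ?thesis unfolding d2 using dr[of "c22@Q" "n-1" R] ls l by simp
  qed
  show ?thesis unfolding M G_def t1 t2 t3 d3 A0_def ..
qed


lemma D_mult:
  assumes m: "\<And>as. length as = n \<Longrightarrow> f (mu as) = mu (map f as)" and l: "length as = 2*n-1" "n \<ge> 2"
  shows "f (derived_product n mu f as) = derived_product n mu f (map f as)"
proof -
  have "f (derived_product n mu f as) = mu (map f (mu (take n as) # map f (drop n as)))"
    unfolding derived_product_def by (rule m) (use l in simp)
  also have "\<dots> = mu (f (mu (take n as)) # map f (map f (drop n as)))" by simp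
  also have "f (mu (take n as)) = mu (map f (take n as))" by (rule m) (use l in simp)
  finally show ?thesis unfolding derived_product_def by (simp add: take_map drop_map)
qed

theorem theorem3p1:
  fixes scale :: "'k::field_char_0 \<Rightarrow> 'v::ab_group_add \<Rightarrow> 'v"
    and n :: nat and mu :: "'v list \<Rightarrow> 'v" and alpha :: "'v \<Rightarrow> 'v"
  assumes "n \<ge> 2"
    and "multiplicative_hom_algebra scale n mu (replicate (n - 1) alpha)"
    and "totally_hom_associative n mu (replicate (n - 1) alpha)"
  shows "multiplicative_hom_algebra scale (2 * n - 1) (derived_product n mu alpha)
           (replicate (2 * n - 2) (alpha \<circ> alpha))
       \<and> totally_hom_associative (2 * n - 1) (derived_product n mu alpha)
           (replicate (2 * n - 2) (alpha \<circ> alpha))"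
proof -
  let ?D = "derived_product n mu alpha"
  have n2: "n \<ge> 2" by fact
  have VS: "Vector_Spaces.vector_space scale" and MLn: "multilinear scale n mu"
    and lin0: "\<forall>f \<in> set (replicate (n - 1) alpha). Vector_Spaces.linear scale scale f"
    and ex: "\<exists>a. multiplicative_with n mu (replicate (n - 1) alpha) a"
    using assms(2) unfolding multiplicative_hom_algebra_def hom_algebra_def by auto
  have alin: "Vector_Spaces.linear scale scale alpha" using lin0 n2 by auto
  obtain a where a: "multiplicative_with n mu (replicate (n - 1) alpha) a" using ex by blast
  have "a = alpha" using a n2 unfolding multiplicative_with_def by auto
  then have mult: "\<And>as. length as = n \<Longrightarrow> alpha (mu as) = mu (map alpha as)"
    using a unfolding multiplicative_with_def by auto
  have mlin: "\<And>xs ys. length xs + length ys + 1 = n \<Longrightarrow> Vector_Spaces.linear scale scale (\<lambda>x. mu (xs @ x # ys))"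
    using MLn unfolding multilinear_def by auto
  have ML2: "multilinear scale (2*n-1) ?D"
    unfolding multilinear_def
  proof (intro allI impI)
    fix xs ys :: "'v list" assume h: "length xs + length ys + 1 = 2 * n - 1"
    show "Vector_Spaces.linear scale scale (\<lambda>x. ?D (xs @ x # ys))"
    proof (cases "length xs < n")
      case True
      define k where "k = n - 1 - length xs"
      have eq: "(\<lambda>x. ?D (xs @ x # ys)) = (\<lambda>y. mu ([] @ y # map alpha (drop k ys))) \<circ> (\<lambda>x. mu (xs @ x # take k ys))"
      proof -
        have s: "n - length xs = Suc k" using True unfolding k_def by simp
        show ?thesis unfolding derived_product_def using True by (simp add: s comp_def)
      qed
      show ?thesis unfolding eq
        by (rule Vector_Spaces.linear_compose; rule mlin) (use True h in \<open>auto simp: k_def\<close>)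
    next
      case False
      have eq: "(\<lambda>x. ?D (xs @ x # ys)) = (\<lambda>y. mu ((mu (take n xs) # map alpha (drop n xs)) @ y # map alpha ys)) \<circ> alpha"
        unfolding derived_product_def using False by auto
      show ?thesis unfolding eq
        by (rule Vector_Spaces.linear_compose[OF alin]; rule mlin) (use False h in auto)
    qed
  qed
  have P1: "multiplicative_hom_algebra scale (2 * n - 1) ?D (replicate (2 * n - 2) (alpha \<circ> alpha))"
    unfolding multiplicative_hom_algebra_def hom_algebra_def
  proof (intro conjI)
    show "Vector_Spaces.vector_space scale" by fact
    show "multilinear scale (2*n-1) ?D" by fact
    show "length (replicate (2 * n - 2) (alpha \<circ> alpha)) = 2 * n - 1 - 1" by simp
    show "\<forall>f\<in>set (replicate (2 * n - 2) (alpha \<circ> alpha)). Vector_Spaces.linear scale scale f"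
      using Vector_Spaces.linear_compose[OF alin alin] by auto
    show "\<exists>b. multiplicative_with (2 * n - 1) ?D (replicate (2 * n - 2) (alpha \<circ> alpha)) b"
    proof (intro exI)
      show "multiplicative_with (2 * n - 1) ?D (replicate (2 * n - 2) (alpha \<circ> alpha)) (alpha \<circ> alpha)"
        unfolding multiplicative_with_def
      proof (intro conjI allI impI)
        fix as :: "'v list" assume l: "length as = 2*n-1"
        have "(alpha \<circ> alpha) (?D as) = alpha (?D (map alpha as))"
          using D_mult[of n alpha mu as] mult l n2 by simp
        also have "\<dots> = ?D (map alpha (map alpha as))"
          using D_mult[of n alpha mu "map alpha as"] mult l n2 by simp
        finally show "(alpha \<circ> alpha) (?D as) = ?D (map (alpha \<circ> alpha) as)" by simp
      qed auto
    qed
  qed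
  have A: "\<And>j as. j < n \<Longrightarrow> length as = 2*n - 1 \<Longrightarrow> Bg n mu alpha j as = Bg n mu alpha 0 as"
    using Bg_0[OF assms(3)] by blast
  have P2: "totally_hom_associative (2 * n - 1) ?D (replicate (2 * n - 2) (alpha \<circ> alpha))"
    unfolding totally_hom_associative_def
  proof (intro allI impI)
    fix j and as :: "'v list"
    assume j: "j + 1 < 2 * n - 1" and l: "length as = 2 * (2 * n - 1) - 1"
    have r: "replicate (2 * n - 2) (alpha \<circ> alpha) = replicate (2 * n - 1 - 1) (alpha \<circ> alpha)" by simp
    have l4: "length as = 4*n-3" using l n2 by simp
    have hb: "\<And>j. j + 1 \<le> 2*n-1 \<Longrightarrow> hom_bracket (2 * n - 1) ?D (replicate (2 * n - 2) (alpha \<circ> alpha)) j as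
       = Bg (2*n-1) ?D (alpha\<circ>alpha) j as"
      unfolding r by (rule hb_Bg) (use l in auto)
    have "Bg (2*n-1) ?D (alpha\<circ>alpha) j as = Bg (2*n-1) ?D (alpha\<circ>alpha) (j+1) as"
    proof (cases "j + 1 \<le> n - 1")
      case True
      have "Bg (2*n-1) ?D (alpha\<circ>alpha) (0 + j) as = G n mu alpha 0 as"
        by (rule Decomp[OF A]) (use True n2 l4 in auto)
      moreover have "Bg (2*n-1) ?D (alpha\<circ>alpha) (0 + (j+1)) as = G n mu alpha 0 as"
        by (rule Decomp[OF A]) (use True n2 l4 in auto)
      ultimately show ?thesis by simp
    next
      case False
      have e1: "j = (n-1) + (j-(n-1))" "j+1 = (n-1) + (j+1-(n-1))" using False by auto
      have "Bg (2*n-1) ?D (alpha\<circ>alpha) ((n-1) + (j-(n-1))) as = G n mu alpha (n-1) as"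
        by (rule Decomp[OF A]) (use False j n2 l4 in auto)
      moreover have "Bg (2*n-1) ?D (alpha\<circ>alpha) ((n-1) + (j+1-(n-1))) as = G n mu alpha (n-1) as"
        by (rule Decomp[OF A]) (use False j n2 l4 in auto)
      ultimately show ?thesis using e1 by metis
    qed
    then show "hom_bracket (2 * n - 1) ?D (replicate (2 * n - 2) (alpha \<circ> alpha)) j as =
          hom_bracket (2 * n - 1) ?D (replicate (2 * n - 2) (alpha \<circ> alpha)) (j + 1) as"
      using hb[of j] hb[of "j+1"] j by simp
  qed
  show ?thesis using P1 P2 by blast
qed

end
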